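(* Let $W_{kj}$, $k\in[N]$, $j\in[p]$, be i.i.d. $N(0,1)$ random variables and $Z=\min_{k\in[N]}\max_{j\in[p]}W_{kj}$, with probability density function $f_Z$. Provided that $p/\sqrt{2\pi}>\log(Np)\ge2$, $$\text{(i)}\quad \max_{t\in\mathbb{R}}f_Z(t)\le2\{\sqrt2+2\}\log^{3/2}(Np),$$ $$\text{(ii)}\quad \max_{t\in\mathbb{R}}f_Z(t)\ge\Big\{\sqrt2\log^{1/2}\Big(\frac{p}{\sqrt{2\pi}\log N}\Big)-2\Big\}\frac{\log N}{e}.$$
   Context: $\log$ denotes the natural logarithm; $[N]=\{1,\dots,N\}$. *)

theory Defs
  imports "HOL-Probability.Probability"
begin

end

theory Submission
  imports Defs "HOL-Real_Asymp.Real_Asymp"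
begin

definition cdfI :: "(real \<Rightarrow> real) \<Rightarrow> real \<Rightarrow> real" where
  "cdfI g t = (\<integral>x. indicator {..t} x * g x \<partial>lborel)"

lemma cdfI_split:
  fixes g :: "real \<Rightarrow> real"
  assumes g: "integrable lborel g" and ax: "a \<le> x"
  shows "cdfI g x = cdfI g a + (LBINT y=a..x. g y)"
proof -
  have 1: "(LBINT y=a..x. g y) = (\<integral>y. indicator {a<..x} y * g y \<partial>lborel)"
    using ax by (simp add: interval_integral_Ioc set_lebesgue_integral_def)
  have 2: "\<And>y. indicator {..x} y * g y = indicator {..a} y * g y + indicator {a<..x} y * g y"
    using ax by (auto simp: indicator_def)
  have i1: "integrable lborel (\<lambda>y. indicator {..a} y * g y)"
    using integrable_mult_indicator[OF _ g, of "{..a}"] by simp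
  have i2: "integrable lborel (\<lambda>y. indicator {a<..x} y * g y)"
    using integrable_mult_indicator[OF _ g, of "{a<..x}"] by simp
  show ?thesis
    unfolding cdfI_def 1 2 using i1 i2 by (simp add: Bochner_Integration.integral_add)
qed

lemma cdfI_deriv:
  fixes g :: "real \<Rightarrow> real"
  assumes c: "continuous_on UNIV g" and g: "integrable lborel g"
  shows "(cdfI g has_real_derivative g t) (at t)"
proof -
  have "((\<lambda>u. LBINT y=(t-1)..u. g y) has_vector_derivative g t) (at t within {t-1..t+1})"
    by (rule interval_integral_FTC2) (auto intro: continuous_on_subset[OF c])
  then have "((\<lambda>u. cdfI g (t-1) + (LBINT y=(t-1)..u. g y)) has_vector_derivative g t) (at t within {t-1..t+1})"
    by (auto intro!: derivative_eq_intros)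
  then have "(cdfI g has_vector_derivative g t) (at t within {t-1..t+1})"
    by (rule has_vector_derivative_weaken) (auto simp: cdfI_split[OF g])
  then have "(cdfI g has_vector_derivative g t) (at t)"
    by (simp add: at_within_Icc_at)
  then show ?thesis
    by (simp add: has_real_derivative_iff_has_vector_derivative)
qed


lemma decr_lim_nonneg:
  fixes g g' :: "real \<Rightarrow> real"
  assumes d: "\<And>y. y \<ge> a \<Longrightarrow> (g has_real_derivative g' y) (at y) \<and> g' y \<le> 0"
    and lim: "(g \<longlongrightarrow> 0) at_top"
  shows "0 \<le> g a"
proof -
  have "g b \<le> g a" if "b \<ge> a" for b
  proof (rule DERIV_nonpos_imp_decreasing_open[OF that])
    show "\<exists>y. DERIV g x :> y \<and> y \<le> 0" if "a < x" "x < b" for x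
      using d[of x] that by auto
    show "continuous_on {a..b} g"
      using d by (intro continuous_at_imp_continuous_on ballI DERIV_isCont) auto
  qed
  then have "eventually (\<lambda>b. g b \<le> g a) at_top"
    by (auto simp: eventually_at_top_linorder)
  then show ?thesis
    using tendsto_upperbound[OF lim] by auto
qed

abbreviation phi :: "real \<Rightarrow> real" where "phi \<equiv> std_normal_density"
definition Phi :: "real \<Rightarrow> real" where "Phi = cdfI phi"

lemma phi_cont: "continuous_on UNIV phi"
  unfolding normal_density_def by (intro continuous_intros) auto

lemma phi_int: "integrable lborel phi"
  by simp

lemma phi_deriv: "(phi has_real_derivative (- y * phi y)) (at y)"
  unfolding std_normal_density_def
  by (auto intro!: derivative_eq_intros simp: power2_eq_square field_simps)

lemma phi_le: "phi y \<le> 1 / sqrt (2 * pi)"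
  unfolding std_normal_density_def by (simp add: divide_simps)

lemma phi_pos: "0 < phi y"
  by (simp add: normal_density_pos)

lemma Phi_deriv: "(Phi has_real_derivative phi t) (at t)"
  unfolding Phi_def by (rule cdfI_deriv[OF phi_cont phi_int])

lemma Phi_cont: "continuous_on UNIV Phi"
  using Phi_deriv by (intro continuous_at_imp_continuous_on ballI DERIV_isCont) auto

lemma int_ind: "integrable lborel (\<lambda>x. indicator A x * phi x)" if "A \<in> sets borel"
  using integrable_mult_indicator[OF _ phi_int, of A] that by simp

lemma Phi_nonneg: "0 \<le> Phi t"
  unfolding Phi_def cdfI_def by (intro integral_nonneg_AE) auto

lemma Phi_mono: "s \<le> t \<Longrightarrow> Phi s \<le> Phi t"
  unfolding Phi_def cdfI_def
  by (intro integral_mono int_ind) (auto simp: indicator_def)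

lemma Phi_le1: "Phi t \<le> 1"
proof -
  have "Phi t \<le> (\<integral>x. phi x \<partial>lborel)"
    unfolding Phi_def cdfI_def
    by (intro integral_mono int_ind phi_int) (auto simp: indicator_def)
  then show ?thesis by simp
qed

lemma Phi_lim: "(Phi \<longlongrightarrow> 1) at_top"
  using tendsto_integral_at_top[of lborel phi] unfolding Phi_def cdfI_def by simp

lemma Phi_0: "Phi 0 = 1/2"
proof -
  have a: "(\<integral>x. indicator {0<..} x * phi x \<partial>lborel) = (\<integral>x. indicator {0<..} (-x) * phi (-x) \<partial>lborel)"
    using lborel_integral_real_affine[of "-1" "\<lambda>x. indicator {0<..} x * phi x" 0] by simp
  also have "\<dots> = (\<integral>x. indicator {..0} x * phi x \<partial>lborel)"
    by (intro integral_cong_AE) (auto simp: normal_density_def indicator_def intro!: AE_I2 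
        eventually_mono[OF AE_lborel_singleton[of 0]])
  finally have b: "(\<integral>x. indicator {0<..} x * phi x \<partial>lborel) = Phi 0"
    by (simp add: Phi_def cdfI_def)
  have "1 = (\<integral>x. phi x \<partial>lborel)" by simp
  also have "\<dots> = (\<integral>x. indicator {..0} x * phi x + indicator {0<..} x * phi x \<partial>lborel)"
    by (rule Bochner_Integration.integral_cong) (auto simp: indicator_def)
  also have "\<dots> = Phi 0 + Phi 0"
    using b by (subst Bochner_Integration.integral_add) (auto intro!: int_ind simp: Phi_def cdfI_def)
  finally show ?thesis by simp
qed

lemma Q_lim: "((\<lambda>y. 1 - Phi y) \<longlongrightarrow> 0) at_top"
  using tendsto_diff[OF tendsto_const[of 1] Phi_lim] by simp

lemma phi_lim1: "((\<lambda>y. phi y / (y + 1)) \<longlongrightarrow> 0) at_top"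
  unfolding std_normal_density_def by real_asymp

lemma phi_lim2: "((\<lambda>y. phi y / y) \<longlongrightarrow> 0) at_top"
  unfolding std_normal_density_def by real_asymp

lemma mills_lower:
  assumes "x \<ge> 0"
  shows "phi x / (x + 1) \<le> 1 - Phi x"
proof -
  let ?g = "\<lambda>y. (1 - Phi y) - phi y / (y + 1)"
  have "0 \<le> ?g x"
  proof (rule decr_lim_nonneg[where a = x and g = "\<lambda>y. (1 - Phi y) - phi y / (y + 1)" and g' = "\<lambda>y. - y * phi y / (y+1)^2"])
    fix y :: real assume y: "y \<ge> x"
    then have y1: "y + 1 \<noteq> 0" using assms by auto
    have "(?g has_real_derivative (- phi y - ((- y * phi y) * (y + 1) - phi y * 1) / (y+1)^2)) (at y)"
      using y1 by (auto intro!: derivative_eq_intros Phi_deriv phi_deriv simp: power2_eq_square)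
    moreover have "(- phi y - ((- y * phi y) * (y + 1) - phi y * 1) / (y+1)^2) = - y * phi y / (y+1)^2"
    proof -
      have "(y+1)^2 \<noteq> 0" using y1 by simp
      then show ?thesis
        by (simp add: divide_simps) (simp add: algebra_simps power2_eq_square)
    qed
    moreover have "- y * phi y / (y+1)^2 \<le> 0"
      using y assms phi_pos[of y] by (simp add: divide_nonpos_pos)
    ultimately show "(?g has_real_derivative - y * phi y / (y + 1)\<^sup>2) (at y) \<and> - y * phi y / (y + 1)\<^sup>2 \<le> 0"
      by simp
  next
    show "(?g \<longlongrightarrow> 0) at_top"
      using tendsto_diff[OF Q_lim phi_lim1] by simp
  qed
  then show ?thesis by simp
qed

lemma mills_upper:
  assumes "x \<ge> 0"
  shows "x * (1 - Phi x) \<le> phi x"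
proof (cases "x = 0")
  case True then show ?thesis using phi_pos[of 0] by simp
next
  case False
  then have xp: "x > 0" using assms by simp
  let ?g = "\<lambda>y. phi y / y - (1 - Phi y)"
  have "0 \<le> ?g x"
  proof (rule decr_lim_nonneg[where a = x and g = "\<lambda>y. phi y / y - (1 - Phi y)" and g' = "\<lambda>y. - phi y / y^2"])
    fix y :: real assume y: "y \<ge> x"
    then have y1: "y \<noteq> 0" using xp by auto
    have "(?g has_real_derivative (((- y * phi y) * y - phi y * 1) / (y^2) + phi y)) (at y)"
      using y1 by (auto intro!: derivative_eq_intros Phi_deriv phi_deriv simp: power2_eq_square)
    moreover have "(((- y * phi y) * y - phi y * 1) / (y^2) + phi y) = - phi y / y^2"
      using y1 by (simp add: field_simps power2_eq_square)
    moreover have "- phi y / y^2 \<le> 0"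
      using phi_pos[of y] by (simp add: divide_nonpos_pos)
    ultimately show "(?g has_real_derivative - phi y / y^2) (at y) \<and> - phi y / y^2 \<le> 0"
      by simp
  next
    show "(?g \<longlongrightarrow> 0) at_top"
      using tendsto_diff[OF phi_lim2 Q_lim] by simp
  qed
  then show ?thesis using xp by (simp add: field_simps)
qed


lemma dist_cdf:
  fixes X :: "'a \<Rightarrow> real"
  assumes P: "prob_space M" and D: "distributed M lborel X (\<lambda>x. ennreal (g x))" and g: "\<And>x. 0 \<le> g x"
  shows "measure M {\<omega>\<in>space M. X \<omega> \<le> t} = cdfI g t" and "integrable lborel g"
proof -
  interpret prob_space M by (rule P)
  have Xm: "X \<in> borel_measurable M"
    using distributed_measurable[OF D] by simp
  have "(\<integral>x. g x * indicator {..t} x \<partial>lborel) = (\<integral>\<omega>. indicator {..t} (X \<omega>) \<partial>M)"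
    by (rule distributed_integral[OF D]) (auto simp: g)
  also have "\<dots> = (\<integral>\<omega>. indicator {\<omega>\<in>space M. X \<omega> \<le> t} \<omega> \<partial>M)"
    by (intro Bochner_Integration.integral_cong) (auto simp: indicator_def)
  also have "\<dots> = measure M {\<omega>\<in>space M. X \<omega> \<le> t}"
    by (simp add: Int_absorb2 subsetI)
  finally show "measure M {\<omega>\<in>space M. X \<omega> \<le> t} = cdfI g t"
    by (simp add: cdfI_def mult.commute)
  have "integrable lborel (\<lambda>x. g x * 1) \<longleftrightarrow> integrable M (\<lambda>\<omega>. 1::real)"
    by (rule distributed_integrable[OF D]) (auto simp: g)
  then show "integrable lborel g" by simp
qed

lemma Z_cdf:
  fixes M :: "'a measure" and W :: "nat \<Rightarrow> nat \<Rightarrow> 'a \<Rightarrow> real"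
    and N p :: nat and f :: "real \<Rightarrow> real"
  assumes P: "prob_space M"
    and N: "N \<ge> 1" and p: "p \<ge> 1"
    and ind: "prob_space.indep_vars M (\<lambda>_. borel) (\<lambda>(k, j). W k j) ({1..N} \<times> {1..p})"
    and dW: "\<And>k j. k \<in> {1..N} \<Longrightarrow> j \<in> {1..p} \<Longrightarrow>
           distributed M lborel (W k j) std_normal_density"
    and Z: "Z = (\<lambda>\<omega>. Min ((\<lambda>k. Max ((\<lambda>j. W k j \<omega>) ` {1..p})) ` {1..N}))"
    and fpos: "\<And>t. f t \<ge> 0"
    and dZ: "distributed M lborel Z (\<lambda>t. ennreal (f t))"
  shows "cdfI f t = 1 - (1 - Phi t ^ p) ^ N"
proof -
  interpret prob_space M by (rule P)
  let ?K = "{1..N}" and ?J = "{1..p}"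
  let ?X = "\<lambda>(i::nat\<times>nat). (case i of (k, j) \<Rightarrow> W k j)"
  define Mx where "Mx k \<omega> = Max ((\<lambda>j. W k j \<omega>) ` ?J)" for k \<omega>
  have rvW: "W k j \<in> borel_measurable M" if "k \<in> ?K" "j \<in> ?J" for k j
    using distributed_measurable[OF dW[OF that]] by simp
  have rvM: "Mx k \<in> borel_measurable M" if "k \<in> ?K" for k
    unfolding Mx_def using rvW[OF that] by (intro borel_measurable_Max) auto
  have Jne: "?J \<noteq> {}" "finite ?J" using p by auto
  have Kne: "?K \<noteq> {}" "finite ?K" using N by auto
  have indM: "indep_vars (\<lambda>_. borel) Mx ?K"
  proof -
    have "indep_vars (\<lambda>k. PiM ({k}\<times>?J) (\<lambda>_. borel)) (\<lambda>k \<omega>. restrict (\<lambda>i. ?X i \<omega>) ({k}\<times>?J)) ?K"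
      by (rule indep_vars_restrict[OF ind]) (auto simp: disjoint_family_on_def)
    then have "indep_vars (\<lambda>_. borel) (\<lambda>k \<omega>. (\<lambda>g. Max ((\<lambda>j. g (k,j)) ` ?J)) (restrict (\<lambda>i. ?X i \<omega>) ({k}\<times>?J))) ?K"
    proof (rule indep_vars_compose2)
      fix k assume k: "k \<in> ?K"
      show "(\<lambda>(g::nat\<times>nat\<Rightarrow>real). Max ((\<lambda>j. g (k,j)) ` ?J)) \<in> borel_measurable (PiM ({k}\<times>?J) (\<lambda>_. borel))"
      proof (rule borel_measurable_Max[where f="\<lambda>j (g::nat\<times>nat\<Rightarrow>real). g (k,j)" and I="?J" and M="PiM ({k}\<times>?J) (\<lambda>_. (borel::real measure))"])
        show "finite ?J" by simp
        fix j assume "j \<in> ?J"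
        then have "(k,j) \<in> {k}\<times>?J" by simp
        from measurable_component_singleton[where M="\<lambda>_. borel", OF this]
        show "(\<lambda>g. g (k,j)) \<in> borel_measurable (PiM ({k}\<times>?J) (\<lambda>_. borel))" .
      qed
    qed
    moreover have "(\<lambda>k \<omega>. (\<lambda>g. Max ((\<lambda>j. g (k,j)) ` ?J)) (restrict (\<lambda>i. ?X i \<omega>) ({k}\<times>?J))) = Mx"
      unfolding Mx_def by (intro ext arg_cong[where f=Max] image_cong) auto
    ultimately show ?thesis by simp
  qed
  have pW: "prob {\<omega>\<in>space M. W k j \<omega> \<le> t} = Phi t" if "k \<in> ?K" "j \<in> ?J" for k j
    using dist_cdf(1)[OF P dW[OF that]] by (simp add: Phi_def)
  have pM: "prob {\<omega>\<in>space M. Mx k \<omega> \<le> t} = Phi t ^ p" if k: "k \<in> ?K" for k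
  proof -
    have "{\<omega>\<in>space M. Mx k \<omega> \<le> t} = (\<Inter>i\<in>{k}\<times>?J. ?X i -` {..t} \<inter> space M)"
      using Jne by (auto simp: Mx_def)
    then have "prob {\<omega>\<in>space M. Mx k \<omega> \<le> t} = (\<Prod>i\<in>{k}\<times>?J. prob (?X i -` {..t} \<inter> space M))"
      using Jne k by (simp only:) (rule indep_varsD[OF ind], auto)
    also have "\<dots> = (\<Prod>i\<in>{k}\<times>?J. Phi t)"
    proof (rule prod.cong[OF refl])
      fix i assume i: "i \<in> {k}\<times>?J"
      then obtain j where ij: "i = (k, j)" "j \<in> ?J" by auto
      have "?X i -` {..t} \<inter> space M = {\<omega>\<in>space M. W k j \<omega> \<le> t}" using ij by auto
      then show "prob (?X i -` {..t} \<inter> space M) = Phi t" using pW[OF k ij(2)] by simp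
    qed
    also have "\<dots> = Phi t ^ p" by simp
    finally show ?thesis .
  qed
  have "{\<omega>\<in>space M. Z \<omega> > t} = (\<Inter>k\<in>?K. Mx k -` {t<..} \<inter> space M)"
    using Kne Jne by (auto simp: Z Mx_def)
  then have "prob {\<omega>\<in>space M. Z \<omega> > t} = (\<Prod>k\<in>?K. prob (Mx k -` {t<..} \<inter> space M))"
    using Kne by (simp only:) (rule indep_varsD[OF indM], auto)
  also have "\<dots> = (\<Prod>k\<in>?K. 1 - Phi t ^ p)"
  proof (rule prod.cong[OF refl])
    fix k assume k: "k \<in> ?K"
    have "Mx k -` {t<..} \<inter> space M = space M - {\<omega>\<in>space M. Mx k \<omega> \<le> t}" by auto
    then show "prob (Mx k -` {t<..} \<inter> space M) = 1 - Phi t ^ p"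
      using pM[OF k] rvM[OF k] by (simp add: prob_compl)
  qed
  also have "\<dots> = (1 - Phi t ^ p) ^ N" by simp
  finally have gt: "prob {\<omega>\<in>space M. Z \<omega> > t} = (1 - Phi t ^ p) ^ N" .
  have rvZ: "Z \<in> borel_measurable M" using distributed_measurable[OF dZ] by simp
  have "{\<omega>\<in>space M. Z \<omega> > t} = space M - {\<omega>\<in>space M. Z \<omega> \<le> t}" by auto
  then have "prob {\<omega>\<in>space M. Z \<omega> \<le> t} = 1 - (1 - Phi t ^ p) ^ N"
    using gt rvZ by (simp add: prob_compl)
  then show ?thesis using dist_cdf(1)[OF P dZ fpos] by simp
qed


lemma bern:
  fixes u :: real assumes u: "0 \<le> u" "u \<le> 1"
  shows "(1-u)^n * (1 + real n * u) \<le> 1"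
proof (induction n)
  case 0 show ?case by simp
next
  case (Suc n)
  have e: "(1-u) * (1 + (real n + 1) * u) = 1 + real n * u - (real n + 1) * u^2"
    by (simp add: algebra_simps power2_eq_square)
  have "(1-u) * (1 + (real n + 1) * u) \<le> 1 + real n * u"
    unfolding e using u by (simp add: mult_nonneg_nonneg)
  then have "(1-u)^n * ((1-u) * (1 + (real n + 1) * u)) \<le> (1-u)^n * (1 + real n * u)"
    using u by (intro mult_left_mono) auto
  also have "\<dots> \<le> 1" by (rule Suc.IH)
  finally show ?case by (simp add: algebra_simps)
qed

lemma hle1:
  fixes u :: real assumes u: "0 \<le> u" "u \<le> 1" and N: "N \<ge> 1"
  shows "real N * u * (1-u)^(N-1) \<le> 1"
proof -
  have b: "(1-u)^(N-1) * (1 + real (N-1) * u) \<le> 1" by (rule bern[OF u])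
  have "real N * u \<le> 1 + real (N-1) * u"
    using N u by (simp add: of_nat_diff algebra_simps)
  then have "real N * u * (1-u)^(N-1) \<le> (1 + real (N-1) * u) * (1-u)^(N-1)"
    using u by (intro mult_right_mono) auto
  then show ?thesis using b by (simp add: mult.commute)
qed

lemma xbound:
  fixes x s M :: real and N :: nat
  assumes x: "0 \<le> x" and s: "0 < s" and M: "1 \<le> M" "ln (real N) \<le> M" and N: "N \<ge> 1"
  shows "x * min 1 (real N * exp (-(x * s))) \<le> M / s"
proof (cases "x * s \<le> M")
  case True
  then have "x \<le> M/s" using s by (simp add: field_simps)
  moreover have "x * min 1 (real N * exp (-(x * s))) \<le> x"
    using x by (simp add: mult_left_le)
  ultimately show ?thesis by linarith
next
  case False
  define y where "y = x * s"
  have yM: "y > M" using False by (simp add: y_def)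
  have h: "0 \<le> (M - 1) * (y - M)" using yM M by (intro mult_nonneg_nonneg) auto
  have e: "(M - 1) * (y - M) = M * (1 + (y - M)) - y" by (simp add: algebra_simps)
  have "y \<le> M * (1 + (y - M))" using h e by linarith
  also have "\<dots> \<le> M * exp (y - M)"
    using M by (intro mult_left_mono) (auto simp: add.commute)
  finally have "y * exp (-y) \<le> M * exp (y - M) * exp (-y)"
    by (intro mult_right_mono) auto
  also have "\<dots> = M * exp (-M)" by (simp add: mult.assoc exp_add[symmetric])
  finally have ye: "y * exp (-y) \<le> M * exp (-M)" .
  have "real N = exp (ln (real N))" using N by simp
  also have "\<dots> \<le> exp M" using M by simp
  finally have NM: "real N * exp (-M) \<le> 1" by (simp add: exp_minus field_simps)
  have "x * min 1 (real N * exp (-(x * s))) \<le> x * (real N * exp (-y))"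
    using x by (intro mult_left_mono) (auto simp: y_def)
  also have "\<dots> = real N * (y * exp (-y)) / s" using s by (simp add: y_def field_simps)
  also have "\<dots> \<le> real N * (M * exp (-M)) / s"
    using s ye by (intro divide_right_mono mult_left_mono) auto
  also have "\<dots> = (real N * exp (-M)) * M / s" by (simp add: algebra_simps)
  also have "\<dots> \<le> 1 * M / s"
    using s M NM by (intro divide_right_mono mult_right_mono) auto
  finally show ?thesis by simp
qed

lemma Np_le:
  fixes N p :: nat
  assumes N: "N \<ge> 1" and p: "p \<ge> 1" and h1: "real p / sqrt (2*pi) > ln (real N * real p)"
  shows "real N * real p \<le> 2 ^ p"
proof -
  have s2: "2 \<le> sqrt (2*pi)"
    using pi_ge_two real_sqrt_le_mono[of 4 "2*pi"] by simp
  have "1 \<le> real N" "1 \<le> real p" using N p by simp_all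
  then have "1 \<le> real N * real p" using mult_mono[of 1 "real N" 1 "real p"] by simp
  then have Lpos: "0 \<le> ln (real N * real p)" by simp
  have "ln (real N * real p) \<le> real p / 2"
  proof -
    have "ln (real N * real p) * 2 \<le> ln (real N * real p) * sqrt (2*pi)"
      using s2 Lpos by (intro mult_left_mono) auto
    also have "\<dots> < real p" using h1 by (simp add: field_simps)
    finally show ?thesis by simp
  qed
  moreover have "0 < real N * real p" using N p by simp
  ultimately have "real N * real p \<le> exp (real p / 2)"
    by (metis exp_le_cancel_iff exp_ln)
  also have "\<dots> = exp (1/2) ^ p" by (simp add: exp_of_nat_mult[symmetric])
  also have "\<dots> \<le> 2 ^ p"
  proof (intro power_mono)
    have "exp (1/2::real) ^ 2 = exp 1" by (simp add: exp_of_nat_mult[symmetric])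
    also have "\<dots> \<le> 2 ^ 2" using exp_le by simp
    finally show "exp (1/2::real) \<le> 2"
      by (rule power2_le_imp_le) simp
  qed simp
  finally show ?thesis .
qed


lemma bound_i:
  fixes N p :: nat and t :: real
  assumes N: "N \<ge> 1" and p: "p \<ge> 1"
    and h1: "real p / sqrt (2*pi) > ln (real N * real p)"
    and h2: "ln (real N * real p) \<ge> 2"
  shows "real N * (1 - Phi t ^ p) ^ (N - 1) * (real p * Phi t ^ (p - 1) * phi t)
          \<le> 2 * (sqrt 2 + 2) * ln (real N * real p) powr (3/2)"
proof -
  define L where "L = ln (real N * real p)"
  define F where "F = Phi t"
  define u where "u = F ^ p"
  define E where "E = real N * (1 - F ^ p) ^ (N - 1) * (real p * F ^ (p - 1) * phi t)"
  have NP: "0 < real N * real p" using N p by simp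
  have expL: "exp L = real N * real p" using NP by (simp add: L_def)
  have L2: "2 \<le> L" using h2 by (simp add: L_def)
  have F01: "0 \<le> F" "F \<le> 1" using Phi_nonneg Phi_le1 by (simp_all add: F_def)
  have u01: "0 \<le> u" "u \<le> 1" using F01 by (simp_all add: u_def power_le_one)
  have sL: "1 \<le> sqrt L" using L2 by simp
  have Lpow: "L powr (3/2) = L * sqrt L"
  proof -
    have "L powr (3/2) = L powr (1 + 1/2)" by simp
    also have "\<dots> = L powr 1 * L powr (1/2)" using L2 by (subst powr_add) auto
    also have "\<dots> = L * sqrt L" using L2 by (simp add: powr_half_sqrt)
    finally show ?thesis .
  qed
  define B where "B = 2 * (sqrt 2 + 2) * (L * sqrt L)"
  have B1: "1 \<le> B"
  proof -
    have "1 \<le> L * sqrt L" using L2 sL mult_mono[of 1 L 1 "sqrt L"] by simp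
    moreover have "1 \<le> 2 * (sqrt 2 + 2)" by simp
    ultimately show ?thesis unfolding B_def using mult_mono[of 1 "2 * (sqrt 2 + 2)" 1 "L * sqrt L"] by simp
  qed
  have phile: "phi t \<le> 1/2"
  proof -
    have "2 \<le> sqrt (2*pi)" using pi_ge_two real_sqrt_le_mono[of 4 "2*pi"] by simp
    then have "1 / sqrt (2*pi) \<le> 1/2" by (simp add: divide_simps)
    then show ?thesis using phi_le[of t] by linarith
  qed
  have phi0: "0 \<le> phi t" by simp
  have gen: "E \<le> real N * real p * phi t"
  proof -
    have a: "(1 - F ^ p) ^ (N - 1) \<le> 1" using u01 by (simp add: u_def power_le_one)
    have b: "F ^ (p - 1) \<le> 1" using F01 by (simp add: power_le_one)
    have c: "(1 - F ^ p) ^ (N - 1) * F ^ (p - 1) \<le> 1"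
      using a b u01 F01 mult_mono[OF a b] by (simp add: u_def)
    have "E = real N * real p * phi t * ((1 - F ^ p) ^ (N - 1) * F ^ (p - 1))"
      by (simp add: E_def algebra_simps)
    also have "\<dots> \<le> real N * real p * phi t * 1"
      using c phi0 by (intro mult_left_mono) auto
    finally show ?thesis by simp
  qed
  have "E \<le> B"
  proof (cases "t \<le> 0")
    case True
    then have Fh: "F \<le> 1/2" using Phi_mono[OF True] Phi_0 by (simp add: F_def)
    have "E \<le> real N * (real p * F ^ (p - 1) * phi t)"
    proof -
      have a: "(1 - F ^ p) ^ (N - 1) \<le> 1" using u01 by (simp add: u_def power_le_one)
      have "0 \<le> real N * (real p * F ^ (p - 1) * phi t)" using F01 by simp
      then have "(real N * (real p * F ^ (p - 1) * phi t)) * (1 - F ^ p) ^ (N - 1) \<le> (real N * (real p * F ^ (p - 1) * phi t)) * 1"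
        using a by (intro mult_left_mono) auto
      then show ?thesis by (simp add: E_def algebra_simps)
    qed
    also have "\<dots> \<le> real N * (real p * (1/2) ^ (p - 1) * (1/2))"
      using F01 Fh phile phi0 by (intro mult_left_mono mult_mono power_mono) auto
    also have "\<dots> = real N * real p / 2 ^ p"
    proof -
      have "(2::real) ^ p = 2 ^ (p - 1) * 2" using p by (cases p) auto
      then show ?thesis by (simp add: field_simps power_one_over)
    qed
    also have "\<dots> \<le> 1" using Np_le[OF N p h1] by simp
    finally show ?thesis using B1 by linarith
  next
    case False
    then have t0: "t \<ge> 0" by simp
    have Fh: "1/2 \<le> F" using Phi_mono[OF t0] Phi_0 by (simp add: F_def)
    show ?thesis
    proof (cases "t^2 \<ge> 2 * L")
      case True
      have "phi t = (1 / sqrt (2*pi)) * exp (-(t^2) / 2)" by (simp add: std_normal_density_def)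
      also have "\<dots> \<le> 1 * exp (- L)"
      proof (intro mult_mono)
        show "1 / sqrt (2*pi) \<le> 1" using pi_ge_two by (simp add: divide_simps)
        show "exp (-(t^2) / 2) \<le> exp (- L)" using True by simp
      qed auto
      finally have "phi t \<le> 1 / (real N * real p)" using expL by (simp add: exp_minus divide_inverse inverse_mult_distrib)
      then have "real N * real p * phi t \<le> 1" using NP by (simp add: field_simps)
      then show ?thesis using gen B1 by linarith
    next
      case False
      then have "sqrt (t^2) < sqrt (2 * L)" by (intro real_sqrt_less_mono) simp
      then have tL: "t < sqrt 2 * sqrt L" using t0 by (simp add: real_sqrt_mult)
      define x where "x = real p * phi t"
      define sg where "sg = 1 / (t + 1)"
      have x0: "0 \<le> x" by (simp add: x_def)
      have sg0: "0 < sg" using t0 by (simp add: sg_def)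
      have Fpos: "0 < F" using Fh by simp
      have Fp: "F ^ p = F ^ (p - 1) * F" using p by (cases p) auto
      have Eeq: "E = (real N * u * (1 - u) ^ (N - 1)) * (x / F)"
        using Fpos by (simp add: E_def u_def x_def Fp field_simps)
      have hmin: "real N * u * (1 - u) ^ (N - 1) \<le> min 1 (real N * exp (-(x * sg)))"
      proof -
        have Q: "phi t / (t + 1) \<le> 1 - F" using mills_lower[OF t0] by (simp add: F_def)
        have "F \<le> exp (- (1 - F))" using exp_ge_add_one_self[of "-(1-F)"] by simp
        then have "u \<le> exp (- (1 - F)) ^ p" unfolding u_def using F01 by (intro power_mono) auto
        also have "\<dots> = exp (- (real p * (1 - F)))" by (simp add: exp_of_nat_mult[symmetric] algebra_simps)
        also have "\<dots> \<le> exp (-(x * sg))"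
        proof -
          have "x * sg = real p * (phi t / (t + 1))" by (simp add: x_def sg_def)
          also have "\<dots> \<le> real p * (1 - F)" using Q by (intro mult_left_mono) auto
          finally show ?thesis by simp
        qed
        finally have ue: "u \<le> exp (-(x * sg))" .
        have a: "real N * u * (1 - u) ^ (N - 1) \<le> 1" by (rule hle1[OF u01 N])
        have "real N * u * (1 - u) ^ (N - 1) \<le> real N * u * 1"
          using u01 by (intro mult_left_mono) (auto simp: power_le_one)
        also have "\<dots> \<le> real N * exp (-(x * sg))" using ue by (simp add: mult_left_mono)
        finally show ?thesis using a by simp
      qed
      have "E \<le> min 1 (real N * exp (-(x * sg))) * (2 * x)"
      proof -
        have "x / F \<le> x / (1/2)" using Fh x0 by (intro divide_left_mono) auto
        then have "x / F \<le> 2 * x" by simp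
        moreover have "0 \<le> x / F" using x0 Fpos by simp
        moreover have "0 \<le> real N * u * (1 - u) ^ (N - 1)" using u01 by simp
        ultimately show ?thesis unfolding Eeq using hmin by (intro mult_mono) auto
      qed
      also have "\<dots> = 2 * (x * min 1 (real N * exp (-(x * sg))))" by simp
      also have "\<dots> \<le> 2 * (L / sg)"
      proof -
        have "ln (real N) \<le> L" unfolding L_def using N p by (simp add: ln_mult)
        then show ?thesis using xbound[OF x0 sg0 _ _ N, of L] L2 by simp
      qed
      also have "\<dots> = 2 * L * (t + 1)" by (simp add: sg_def)
      also have "\<dots> \<le> 2 * L * (sqrt 2 * sqrt L + 1)" using tL L2 by (intro mult_left_mono) auto
      also have "\<dots> \<le> B"
      proof -
        have e1: "2 * L * (sqrt 2 * sqrt L + 1) = 2 * sqrt 2 * (L * sqrt L) + 2 * L" by (simp add: algebra_simps)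
        have "L * 1 \<le> L * sqrt L" using sL L2 by (intro mult_left_mono) auto
        then have e2: "2 * L \<le> 4 * (L * sqrt L)" using L2 by linarith
        have e3: "B = 2 * sqrt 2 * (L * sqrt L) + 4 * (L * sqrt L)" by (simp add: B_def algebra_simps)
        show ?thesis using e1 e2 e3 by linarith
      qed
      finally show ?thesis .
    qed
  qed
  then show ?thesis by (simp add: E_def B_def F_def L_def[symmetric] Lpow)
qed


lemma e_bound:
  fixes N :: nat assumes N: "N \<ge> 2"
  shows "exp (-1) \<le> (1 - 1 / real N) ^ (N - 1)"
proof -
  define m where "m = real (N - 1)"
  have m1: "1 \<le> m" using N by (simp add: m_def)
  have Nm: "real N = m + 1" using N by (simp add: m_def of_nat_diff)
  have "(1 + 1/m) ^ (N - 1) \<le> exp (1/m) ^ (N - 1)"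
    using m1 by (intro power_mono) (auto simp: add.commute)
  also have "\<dots> = exp 1" using m1 by (simp add: exp_of_nat_mult[symmetric] m_def)
  finally have a: "(1 + 1/m) ^ (N - 1) \<le> exp 1" .
  have b: "(1 - 1 / real N) = inverse (1 + 1/m)" using m1 by (simp add: Nm field_simps)
  have "exp (-1) = inverse (exp (1::real))" by (rule exp_minus)
  also have "\<dots> \<le> inverse ((1 + 1/m) ^ (N - 1))"
  proof (rule le_imp_inverse_le[OF a])
    have "0 < 1 + 1/m" using m1 by (simp add: add_pos_pos)
    then show "0 < (1 + 1/m) ^ (N - 1)" by simp
  qed
  also have "\<dots> = (1 - 1 / real N) ^ (N - 1)" by (simp add: b power_inverse)
  finally show ?thesis .
qed

lemma bound_ii:
  fixes N p :: nat
  assumes N: "N \<ge> 2" and p: "p \<ge> 1"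
    and h1: "real p / sqrt (2*pi) > ln (real N * real p)"
    and h2: "ln (real N * real p) \<ge> 2"
  shows "\<exists>t. (sqrt 2 * ln (real p / (sqrt (2 * pi) * ln (real N))) powr (1/2) - 2) * ln (real N) / exp 1
            \<le> real N * (1 - Phi t ^ p) ^ (N - 1) * (real p * Phi t ^ (p - 1) * phi t)"
proof -
  define E where "E t = real N * (1 - Phi t ^ p) ^ (N - 1) * (real p * Phi t ^ (p - 1) * phi t)" for t
  have E0: "0 \<le> E t" for t
  proof -
    have "Phi t ^ p \<le> 1" using Phi_nonneg Phi_le1 by (simp add: power_le_one)
    then show ?thesis using Phi_nonneg[of t] by (simp add: E_def)
  qed
  define LN where "LN = ln (real N)"
  define sp where "sp = sqrt (2 * pi)"
  have sp0: "0 < sp" by (simp add: sp_def)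
  have LN0: "0 < LN" using N by (simp add: LN_def)
  have "LN \<le> ln (real N * real p)" using N p by (simp add: LN_def ln_mult)
  then have pLN: "LN < real p / sp" using h1 by (simp add: sp_def)
  define a where "a = real p / (sp * LN)"
  have a1: "1 < a" using pLN sp0 LN0 by (simp add: a_def field_simps)
  have lna: "0 < ln a" using a1 by simp
  define s where "s = sqrt 2 * ln a powr (1/2)"
  have s_eq: "s = sqrt 2 * sqrt (ln a)" using lna by (simp add: s_def powr_half_sqrt)
  have s2: "s^2 = 2 * ln a" using lna by (simp add: s_eq power_mult_distrib)
  have goal_form: "(sqrt 2 * ln (real p / (sqrt (2 * pi) * ln (real N))) powr (1/2) - 2) * ln (real N) / exp 1
                   = (s - 2) * LN / exp 1"
    by (simp add: s_def a_def sp_def LN_def)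
  show ?thesis
  proof (cases "s \<le> 2")
    case True
    have "(s - 2) * LN / exp 1 \<le> 0" using True LN0 by (simp add: divide_nonpos_pos mult_nonpos_nonneg)
    then have "(s - 2) * LN / exp 1 \<le> E 0" using E0[of 0] by linarith
    then show ?thesis unfolding goal_form E_def by blast
  next
    case False
    then have s2': "s > 2" by simp
    have NP2: "real N * real p \<le> 2 ^ p" using Np_le[of N p] N p h1 by simp
    have low: "Phi 0 ^ p \<le> 1 / real N"
    proof -
      have "real N \<le> real N * real p" using p N by simp
      then have "real N \<le> 2 ^ p" using NP2 by linarith
      then show ?thesis using N by (simp add: Phi_0 power_one_over field_simps)
    qed
    have "((\<lambda>t. Phi t ^ p) \<longlongrightarrow> 1 ^ p) at_top" by (intro tendsto_power Phi_lim)
    moreover have "1 / real N < 1 ^ p" using N by simp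
    ultimately have "eventually (\<lambda>t. 1 / real N < Phi t ^ p) at_top" by (rule order_tendstoD(1))
    then obtain b0 where b0: "\<And>t. t \<ge> b0 \<Longrightarrow> 1 / real N < Phi t ^ p"
      by (auto simp: eventually_at_top_linorder)
    define b where "b = max b0 0"
    have high: "1 / real N \<le> Phi b ^ p" using b0[of b] by (simp add: b_def)
    have "continuous_on {0..b} (\<lambda>t. Phi t ^ p)"
      by (intro continuous_intros continuous_on_subset[OF Phi_cont]) auto
    then obtain t where t: "0 \<le> t" "t \<le> b" "Phi t ^ p = 1 / real N"
      using IVT'[of "\<lambda>t. Phi t ^ p" 0 "1 / real N" b] low high by (auto simp: b_def)
    define F where "F = Phi t"
    define Q where "Q = 1 - F"
    have Fh: "1/2 \<le> F" using Phi_mono[OF t(1)] Phi_0 by (simp add: F_def)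
    have Fpos: "0 < F" using Fh by simp
    have Fp: "F ^ p = 1 / real N" using t(3) by (simp add: F_def)
    have lnF: "real p * ln F = - LN"
    proof -
      have "ln (F ^ p) = real p * ln F" using Fpos by (simp add: ln_realpow)
      also have "ln (F ^ p) = - LN" using N by (simp add: Fp LN_def ln_div)
      finally show ?thesis by simp
    qed
    have phi_t: "t * LN \<le> real p * phi t / F"
    proof -
      have "ln (1/F) \<le> 1/F - 1" using Fpos by (intro ln_le_minus_one) simp
      then have "- ln F \<le> Q / F" using Fpos by (simp add: ln_div Q_def field_simps)
      then have "LN \<le> real p * (Q / F)" using lnF p
        by (metis minus_minus mult_left_mono mult_minus_right of_nat_0_le_iff)
      then have "t * LN \<le> t * (real p * (Q / F))" using t(1) by (intro mult_left_mono) auto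
      also have "\<dots> = real p * (t * Q) / F" by simp
      also have "\<dots> \<le> real p * phi t / F"
        using mills_upper[OF t(1)] Fpos by (intro divide_right_mono mult_left_mono) (auto simp: Q_def F_def)
      finally show ?thesis .
    qed
    have QLN: "real p * Q \<le> LN"
    proof -
      have "ln F \<le> F - 1" using Fpos by (rule ln_le_minus_one)
      then have "real p * Q \<le> real p * (- ln F)" by (intro mult_left_mono) (auto simp: Q_def)
      then show ?thesis using lnF by simp
    qed
    have ts: "s - 2 \<le> t"
    proof (rule ccontr)
      assume "\<not> s - 2 \<le> t"
      then have tx: "t < s - 2" by simp
      define x where "x = s - 2"
      have x0: "0 \<le> x" using s2' by (simp add: x_def)
      have "1 - Phi x \<le> Q" using Phi_mono[of t x] tx by (simp add: Q_def F_def x_def)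
      moreover have "phi x / (x + 1) \<le> 1 - Phi x" by (rule mills_lower[OF x0])
      moreover have "LN / real p < phi x / (x + 1)"
      proof -
        have ps: "phi s = LN / real p"
        proof -
          have "exp (-(s^2) / 2) = exp (- ln a)" by (simp add: s2)
          also have "\<dots> = 1 / a" using a1 by (simp add: exp_minus divide_inverse)
          finally have "phi s = 1 / sp * (1 / a)" by (simp add: std_normal_density_def sp_def)
          then show ?thesis using sp0 LN0 p by (simp add: a_def field_simps)
        qed
        have px: "phi x = exp (2 * s - 2) * phi s"
        proof -
          have "-(x^2) / 2 = (2 * s - 2) + (-(s^2) / 2)" by (simp add: x_def power2_eq_square field_simps)
          then have "exp (-(x^2) / 2) = exp (2 * s - 2) * exp (-(s^2) / 2)" by (simp only: exp_add[symmetric])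
          then show ?thesis by (simp add: std_normal_density_def)
        qed
        have "x + 1 < exp (2 * s - 2)"
        proof -
          have "1 + (2 * s - 2) \<le> exp (2 * s - 2)" by (rule exp_ge_add_one_self)
          then show ?thesis using s2' by (simp add: x_def)
        qed
        then have "(x + 1) * phi s < exp (2 * s - 2) * phi s"
          using phi_pos[of s] by (intro mult_strict_right_mono) auto
        then have "phi s < phi x / (x + 1)" using x0 by (simp add: px field_simps)
        then show ?thesis using ps by simp
      qed
      ultimately have "LN / real p < Q" by linarith
      then have "LN < real p * Q" using p by (simp add: field_simps)
      then show False using QLN by simp
    qed
    have Eeq: "E t = (1 - 1 / real N) ^ (N - 1) * (real p * phi t / F)"
    proof -
      have "F ^ p = F ^ (p - 1) * F" using p by (cases p) auto
      then have "F ^ (p - 1) = 1 / (real N * F)" using Fp Fpos N by (auto simp: field_simps)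
      then show ?thesis using N Fpos by (simp add: E_def F_def[symmetric] Fp field_simps)
    qed
    have "(s - 2) * LN / exp 1 = exp (-1) * ((s - 2) * LN)" by (simp add: exp_minus field_simps)
    also have "\<dots> \<le> exp (-1) * (t * LN)" using ts LN0 by (intro mult_left_mono mult_right_mono) auto
    also have "\<dots> \<le> (1 - 1 / real N) ^ (N - 1) * (real p * phi t / F)"
    proof (intro mult_mono e_bound[OF N] phi_t)
      show "0 \<le> (1 - 1 / real N) ^ (N - 1)" using N by simp
      show "0 \<le> t * LN" using t(1) LN0 by simp
    qed
    also have "\<dots> = E t" by (simp add: Eeq)
    finally show ?thesis unfolding goal_form E_def by blast
  qed
qed


theorem proposition5p1:
  fixes M :: "'a measure" and W :: "nat \<Rightarrow> nat \<Rightarrow> 'a \<Rightarrow> real"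
    and N p :: nat and f :: "real \<Rightarrow> real"
  assumes "prob_space M"
    and "N \<ge> 1" and "p \<ge> 1"
    and "prob_space.indep_vars M (\<lambda>_. borel) (\<lambda>(k, j). W k j) ({1..N} \<times> {1..p})"
    and "\<And>k j. k \<in> {1..N} \<Longrightarrow> j \<in> {1..p} \<Longrightarrow>
           distributed M lborel (W k j) std_normal_density"
    and "Z = (\<lambda>\<omega>. Min ((\<lambda>k. Max ((\<lambda>j. W k j \<omega>) ` {1..p})) ` {1..N}))"
    and "continuous_on UNIV f" and "\<And>t. f t \<ge> 0"
    and "distributed M lborel Z (\<lambda>t. ennreal (f t))"
    and "real p / sqrt (2 * pi) > ln (real N * real p)"
    and "ln (real N * real p) \<ge> 2"
  shows "(\<forall>t. f t \<le> 2 * (sqrt 2 + 2) * ln (real N * real p) powr (3/2))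
    \<and> (\<exists>t. f t \<ge> (sqrt 2 * ln (real p / (sqrt (2 * pi) * ln (real N))) powr (1/2) - 2)
                     * ln (real N) / exp 1)"
proof -
  have int: "integrable lborel f" by (rule dist_cdf(2)[OF assms(1) assms(9) assms(8)])
  have fform: "f t = real N * (1 - Phi t ^ p) ^ (N - 1) * (real p * Phi t ^ (p - 1) * phi t)" for t
  proof -
    have d1: "(cdfI f has_real_derivative f t) (at t)" by (rule cdfI_deriv[OF assms(7) int])
    have eq: "cdfI f = (\<lambda>t. 1 - (1 - Phi t ^ p) ^ N)"
      by (rule ext, rule Z_cdf[OF assms(1-6) assms(8) assms(9)])
    have d2: "((\<lambda>t. 1 - (1 - Phi t ^ p) ^ N) has_real_derivative
               (real N * (1 - Phi t ^ p) ^ (N - 1) * (real p * Phi t ^ (p - 1) * phi t))) (at t)"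
      by (auto intro!: derivative_eq_intros Phi_deriv simp: algebra_simps)
    show ?thesis using DERIV_unique[OF d1 d2[folded eq]] .
  qed
  have part1: "\<forall>t. f t \<le> 2 * (sqrt 2 + 2) * ln (real N * real p) powr (3/2)"
    using bound_i[OF assms(2,3,10,11)] fform by simp
  have part2: "\<exists>t. f t \<ge> (sqrt 2 * ln (real p / (sqrt (2 * pi) * ln (real N))) powr (1/2) - 2)
                     * ln (real N) / exp 1"
  proof (cases "N = 1")
    case True
    then show ?thesis using assms(8)[of 0] by auto
  next
    case False
    then have "N \<ge> 2" using assms(2) by simp
    then show ?thesis using bound_ii[OF _ assms(3,10,11)] fform by simp
  qed
  show ?thesis using part1 part2 by blast
qed

end
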